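(* Let $n$ be a positive integer, let $u$ be the unique positive real root of $x^{2n+1} + x^{2n} + \cdots + x^{n} - x^{n-1} - \cdots - x - 1 = 0$, and let $L(x)=\mathrm{Li}_2(x)+\tfrac12\log x\,\log(1-x)$ for $0<x<1$ denote Rogers' dilogarithm. Then $$2L\!\left(u^{n+2}\right) - 2L\!\left(u^{n}\right) - L\!\left(u^2\right) = -\zeta(2).$$
   Context: $\mathrm{Li}_2(x)=\sum_{k\ge1}x^k/k^2$, $\log$ is the real natural logarithm, $\zeta(2)=\pi^2/6$. *)

theory Defs
  imports Complex_Main
begin

definition Li2 :: "real \<Rightarrow> real" where
  "Li2 x = (\<Sum>k. x ^ (k + 1) / (real (k + 1))^2)"

definition rogersL :: "real \<Rightarrow> real" where
  "rogersL x = Li2 x + (1/2) * ln x * ln (1 - x)"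

end

theory Submission imports Defs "HOL-Analysis.Analysis" "HOL-Real_Asymp.Real_Asymp" begin

lemma Li2_alt: "Li2 = (\<lambda>x. \<Sum>n. (1 / (real (Suc n))^2) * x^(Suc n))"
  unfolding Li2_def by (auto intro!: ext)

lemma Li2_deriv:
  assumes "0 < x" "x < 1"
  shows "(Li2 has_real_derivative (- ln (1 - x) / x)) (at x)"
proof -
  let ?f = "\<lambda>n. 1 / (real (Suc n))^2"
  have sm: "summable (\<lambda>n. ?f n * real (Suc n) * y^n)" if "y \<in> {-1<..<1}" for y :: real
  proof (rule summable_comparison_test[where g="\<lambda>n. \<bar>y\<bar>^n"])
    show "summable (\<lambda>n. \<bar>y\<bar>^n)" using that by (intro summable_geometric) auto
    show "\<exists>N. \<forall>n\<ge>N. norm (?f n * real (Suc n) * y^n) \<le> \<bar>y\<bar>^n"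
    proof (intro exI allI impI)
      fix n :: nat
      have "?f n * real (Suc n) * y^n = y^n / real (Suc n)"
        by (simp add: power2_eq_square)
      then have "norm (?f n * real (Suc n) * y^n) = \<bar>y\<bar>^n / real (Suc n)"
        by (simp add: power_abs)
      also have "\<dots> \<le> \<bar>y\<bar>^n" using mult_left_mono[of 1 "real (Suc n)" "\<bar>y\<bar>^n"] by (simp add: divide_le_eq)
      finally show "norm (?f n * real (Suc n) * y^n) \<le> \<bar>y\<bar>^n" .
    qed
  qed
  have D: "DERIV (\<lambda>x. (\<Sum>n. ?f n * x^(Suc n))) x :> (\<Sum>n. ?f n * real (Suc n) * x^n)"
    by (rule DERIV_power_series'[where R=1]) (use sm assms in auto)
  have sx: "summable (\<lambda>n. ?f n * real (Suc n) * x^n)" using sm assms by auto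
  have e1: "(\<lambda>n. ?f n * real (Suc n) * x^n) = (\<lambda>n. x^n / real (Suc n))"
    by (auto intro!: ext simp: power2_eq_square)
  have "ln (1 - x) = (\<Sum>n. (-1)^n * (1 / real (n + 1)) * ((1 - x) - 1)^(Suc n))"
    using assms by (intro ln_series) auto
  also have "\<dots> = (\<Sum>n. - (x * (x^n / real (Suc n))))"
  proof (rule arg_cong[where f=suminf], rule ext)
    fix n
    have "(-1::real)^n * (-x)^(Suc n) = - (x^Suc n)"
        by (induct n) (auto simp: algebra_simps)
    then show "(-1)^n * (1 / real (n + 1)) * ((1 - x) - 1)^(Suc n) = - (x * (x^n / real (Suc n)))"
      by (simp add: field_simps)
  qed
  also have "\<dots> = - (x * (\<Sum>n. x^n / real (Suc n)))"
  proof -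
    have s1: "summable (\<lambda>n. x^n / real (Suc n))" using sx unfolding e1 .
    have s2: "summable (\<lambda>n. x * (x^n / real (Suc n)))" by (rule summable_mult[OF s1])
    show ?thesis using suminf_minus[OF s2] suminf_mult[OF s1, of x] by simp
  qed
  finally have "(\<Sum>n. x^n / real (Suc n)) = - ln (1 - x) / x" using assms by (simp add: field_simps)
  with D e1 show ?thesis unfolding Li2_alt by simp
qed

definition Ld :: "real \<Rightarrow> real" where
  "Ld x = - (ln (1 - x) / x + ln x / (1 - x)) / 2"

lemma L_deriv:
  assumes "0 < x" "x < 1"
  shows "(rogersL has_real_derivative Ld x) (at x)"
proof -
  have d1: "(ln has_real_derivative 1/x) (at x)" by (rule DERIV_ln_divide) (use assms in auto)
  have d0: "((\<lambda>x. 1 - x) has_real_derivative -1) (at x)" by (auto intro!: derivative_eq_intros)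
  have d2: "((\<lambda>x. ln (1 - x)) has_real_derivative (1/(1-x)) * (-1)) (at x)"
    by (rule DERIV_chain2[OF DERIV_ln_divide d0]) (use assms in auto)
  have d3: "((\<lambda>x. ln x * ln (1 - x)) has_real_derivative (1/x * ln (1-x) + (1/(1-x)) * (-1) * ln x)) (at x)"
    by (rule DERIV_mult[OF d1 d2])
  have "((\<lambda>x. Li2 x + 1/2 * (ln x * ln (1 - x))) has_real_derivative
     (- ln (1 - x) / x + 1/2 * (1/x * ln (1-x) + (1/(1-x)) * (-1) * ln x))) (at x)"
    by (intro DERIV_add Li2_deriv assms DERIV_cmult d3)
  moreover have "- ln (1 - x) / x + 1/2 * (1/x * ln (1-x) + (1/(1-x)) * (-1) * ln x) = Ld x"
    unfolding Ld_def using assms by (simp add: field_simps)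
  ultimately show ?thesis unfolding rogersL_def[abs_def] by (simp add: mult.assoc)
qed

lemma Li2_cont: "continuous_on {0..1} Li2"
proof -
  have sm: "summable (\<lambda>n. 1 / (real (Suc n))^2)"
    using sums_summable[OF inverse_squares_sums] by (simp add: add.commute)
  have "uniform_limit {0..1} (\<lambda>n x. \<Sum>i<n. x^(i+1) / (real (i+1))^2)
          (\<lambda>x. suminf (\<lambda>i. x^(i+1) / (real (i+1))^2)) sequentially"
  proof (rule Weierstrass_m_test[OF _ sm])
    fix n and x :: real assume "x \<in> {0..1}"
    then have "\<bar>x\<bar>^(n+1) \<le> 1" by (intro power_le_one) auto
    have "norm (x^(n+1) / (real (n+1))^2) = \<bar>x\<bar>^(n+1) / (real (Suc n))^2"
      by (simp add: abs_mult power_abs)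
    also have "\<dots> \<le> 1 / (real (Suc n))^2"
      by (rule divide_right_mono[OF \<open>\<bar>x\<bar>^(n+1) \<le> 1\<close>]) simp
    finally show "norm (x^(n+1) / (real (n+1))^2) \<le> 1 / (real (Suc n))^2" .
  qed
  then have "uniform_limit {0..1} (\<lambda>n x. \<Sum>i<n. x^(i+1) / (real (i+1))^2) Li2 sequentially"
    unfolding Li2_def[abs_def] .
  then show ?thesis
    by (rule uniform_limit_theorem[rotated]) (auto intro!: always_eventually continuous_intros)
qed

lemma Li2_one: "Li2 1 = pi^2/6"
  unfolding Li2_def using sums_unique[OF inverse_squares_sums] by (simp add: add.commute)

lemma L_left1: "(rogersL \<longlongrightarrow> pi^2/6) (at_left 1)"
proof -
  have "(Li2 \<longlongrightarrow> Li2 1) (at 1 within {0..1})"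
    using Li2_cont unfolding continuous_on_def by auto
  then have a: "(Li2 \<longlongrightarrow> pi^2/6) (at_left 1)"
    unfolding Li2_one at_within_Icc_at_left[of "0::real" 1, simplified] .
  have b: "((\<lambda>x. ln x * ln (1 - x)) \<longlongrightarrow> 0) (at_left (1::real))"
    by real_asymp
  have "((\<lambda>x. Li2 x + 1/2 * (ln x * ln (1 - x))) \<longlongrightarrow> pi^2/6 + 1/2 * 0) (at_left 1)"
    by (intro tendsto_intros a b)
  then show ?thesis unfolding rogersL_def[abs_def] by (simp add: mult.assoc)
qed

lemma lims:
  "filterlim (\<lambda>c::real. 1 - c) (at_left 1) (at_right 0)"
  "filterlim (\<lambda>c::real. 1 / (1 + c)) (at_left 1) (at_right 0)"
  "filterlim (\<lambda>c::real. 1 - c^2) (at_left 1) (at_right 0)"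
  by real_asymp+

lemma t1: fixes A B c :: real assumes "0 < c"
  shows "- ((A - B) / (1/(1+c)) + (-B) / (c/(1+c))) / 2 / (1+c)^2 = - (A/(1+c) - B/c) / 2"
proof -
  have nz: "1 + c \<noteq> 0" "c \<noteq> 0" using assms by auto
  have "(A - B) / (1/(1+c)) + (-B) / (c/(1+c)) = (1+c) * (A - B - B/c)"
    using nz by (simp add: field_simps)
  moreover have "A/(1+c) - B/c = (A - B - B/c) / (1+c)"
    using nz by (simp add: field_simps)
  ultimately show ?thesis using nz by (simp add: power2_eq_square)
qed

lemma t2: fixes A B C c :: real
  shows "-2 * (- (B / c + A / (1 - c)) / 2) + 2 * (- (A / (1 + c) - C / c) / 2) + 2 * (- (2 * c * A / (1 - c^2) + (B + C) / c) / 2)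
     = A * (1/(1-c) - 1/(1+c) - 2*c/(1-c^2))"
  unfolding divide_inverse by algebra

definition G :: "real \<Rightarrow> real" where
  "G c = 2 * rogersL (1 - c) - 2 * rogersL (1 / (1 + c)) - rogersL (1 - c^2)"

lemma G_deriv:
  assumes "0 < c" "c < 1"
  shows "(G has_real_derivative 0) (at c)"
proof -
  have i1: "0 < 1 - c" "1 - c < 1" "0 < 1/(1+c)" "1/(1+c) < 1" "0 < 1 - c^2" "1 - c^2 < 1"
    using assms mult_strict_mono[of c 1 c 1] by (auto simp: field_simps power2_eq_square)
  have "(G has_real_derivative
      (2 * (Ld (1 - c) * (-1)) - 2 * (Ld (1/(1+c)) * (-1 / (1+c)^2)) - Ld (1 - c^2) * (- (2 * c)))) (at c)"
  proof -
    have h1: "((\<lambda>c. rogersL (1 - c)) has_real_derivative Ld (1 - c) * (-1)) (at c)"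
      by (rule DERIV_chain2[where g="\<lambda>c. 1 - c" and x=c, OF L_deriv[OF i1(1,2)]])
         (auto intro!: derivative_eq_intros)
    have h2: "((\<lambda>c. rogersL (1 / (1 + c))) has_real_derivative Ld (1/(1+c)) * (-1 / (1+c)^2)) (at c)"
      by (rule DERIV_chain2[where g="\<lambda>c. 1 / (1 + c)" and x=c, OF L_deriv[OF i1(3,4)]])
         (use assms in \<open>auto intro!: derivative_eq_intros simp: power2_eq_square field_simps\<close>)
    have h3: "((\<lambda>c. rogersL (1 - c^2)) has_real_derivative Ld (1 - c^2) * (- (2 * c))) (at c)"
      by (rule DERIV_chain2[where g="\<lambda>c. 1 - c^2" and x=c, OF L_deriv[OF i1(5,6)]])
         (auto intro!: derivative_eq_intros)
    show ?thesis unfolding G_def[abs_def] by (intro DERIV_diff DERIV_cmult h1 h2 h3)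
  qed
  moreover have "2 * (Ld (1 - c) * (-1)) - 2 * (Ld (1/(1+c)) * (-1 / (1+c)^2)) - Ld (1 - c^2) * (- (2 * c)) = 0"
  proof -
    have l1: "ln (1 - (1 - c)) = ln c" by simp
    have "1 - 1/(1+c) = c/(1+c)" using assms by (simp add: field_simps)
    moreover have "ln (c/(1+c)) = ln c - ln (1 + c)" using assms by (simp add: ln_div)
    ultimately have l2: "ln (1 - 1/(1+c)) = ln c - ln (1 + c)"
      using assms by (simp add: ln_div)
    have l3: "ln (1/(1+c)) = - ln (1+c)" using assms by (simp add: ln_div)
    have l4: "ln (1 - (1 - c^2)) = 2 * ln c" using assms by (simp add: ln_realpow)
    have "ln ((1-c)*(1+c)) = ln (1 - c) + ln (1 + c)" using assms by (subst ln_mult) auto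
    moreover have "(1-c)*(1+c) = 1 - c^2" by (simp add: algebra_simps power2_eq_square)
    ultimately have l5: "ln (1 - c^2) = ln (1 - c) + ln (1 + c)" by simp
    have "1 - c \<noteq> 0" "1 + c \<noteq> 0" "1 - c^2 \<noteq> 0" "c \<noteq> 0" "1 - 1/(1+c) \<noteq> 0"
      using i1 assms by auto
    note nz = this
    have P1: "Ld (1 - c) = - (ln (1 - c) / c + ln c / (1 - c)) / 2"
      unfolding Ld_def l1 by simp
    have P2: "Ld (1/(1+c)) / (1+c)^2 = - (ln c / (1 + c) - ln (1 + c) / c) / 2"
      unfolding Ld_def l2 l3 unfolding \<open>1 - 1/(1+c) = c/(1+c)\<close> by (rule t1[OF assms(1)])
    have P3: "Ld (1 - c^2) * c = - (2 * c * ln c / (1 - c^2) + (ln (1 - c) + ln (1 + c)) / c) / 2"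
      unfolding Ld_def l4 l5 using assms nz by (simp add: field_simps power2_eq_square)
    have E: "2 * (Ld (1 - c) * (-1)) - 2 * (Ld (1/(1+c)) * (-1 / (1+c)^2)) - Ld (1 - c^2) * (- (2 * c))
        = -2 * Ld (1 - c) + 2 * (Ld (1/(1+c)) / (1+c)^2) + 2 * (Ld (1 - c^2) * c)"
      by (simp add: algebra_simps)
    have F: "1/(1-c) - 1/(1+c) - 2*c/(1-c^2) = 0"
      using nz by (simp add: field_simps power2_eq_square)
    have "-2 * Ld (1 - c) + 2 * (Ld (1/(1+c)) / (1+c)^2) + 2 * (Ld (1 - c^2) * c)
        = ln c * (1/(1-c) - 1/(1+c) - 2*c/(1-c^2))"
      unfolding P1 P2 P3 by (rule t2)
    then show ?thesis unfolding E F by simp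
  qed
  ultimately show ?thesis by simp
qed

lemma G_lim: "(G \<longlongrightarrow> - (pi^2/6)) (at_right 0)"
proof -
  have a: "((\<lambda>c. rogersL (1 - c)) \<longlongrightarrow> pi^2/6) (at_right 0)"
    by (rule filterlim_compose[OF L_left1 lims(1)])
  have b: "((\<lambda>c. rogersL (1 / (1 + c))) \<longlongrightarrow> pi^2/6) (at_right 0)"
    by (rule filterlim_compose[OF L_left1 lims(2)])
  have c: "((\<lambda>c. rogersL (1 - c^2)) \<longlongrightarrow> pi^2/6) (at_right 0)"
    by (rule filterlim_compose[OF L_left1 lims(3)])
  have "(G \<longlongrightarrow> 2 * (pi^2/6) - 2 * (pi^2/6) - pi^2/6) (at_right 0)"
    unfolding G_def[abs_def] by (intro tendsto_intros a b c)
  then show ?thesis by simp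
qed

lemma G_const:
  assumes "0 < c" "c < 1"
  shows "G c = - (pi^2/6)"
proof -
  have eq: "\<forall>\<^sub>F x in at_right 0. G x = G c"
  proof -
    have "eventually (\<lambda>x. x \<in> {0<..<1}) (at_right (0::real))"
      by (rule eventually_at_right_real) simp
    then show ?thesis
      by (rule eventually_mono) (rule DERIV_isconst3[of 0 1], use assms G_deriv in auto)
  qed
  have "((\<lambda>x. G c) \<longlongrightarrow> - (pi^2/6)) (at_right (0::real))"
    by (rule Lim_transform_eventually[OF G_lim eq])
  then show ?thesis by (subst (asm) tendsto_const_iff) auto
qed

theorem mainTheorem7:
  fixes n :: nat and u :: real
  assumes "n \<ge> 1"
    and "u > 0"
    and "(\<Sum>k=n..2*n+1. u ^ k) - (\<Sum>k=0..n-1. u ^ k) = 0"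
  shows "2 * rogersL (u ^ (n + 2)) - 2 * rogersL (u ^ n) - rogersL (u ^ 2) = - (pi ^ 2 / 6)"
proof -
  have u1: "u \<noteq> 1"
  proof
    assume "u = 1"
    with assms(3) have "real (2*n+1+1-n) - real (n-1+1) = 0" by (simp add: sum_gp)
    with assms(1) show False by simp
  qed
  obtain m where nm: "n = Suc m" using assms(1) by (cases n) auto
  have s1: "(\<Sum>k=n..2*n+1. u^k) = (u^n - u^(2*n+2))/(1-u)"
    by (subst sum_gp) (use u1 in simp)
  have s2: "(\<Sum>k=0..n-1. u^k) = (1 - u^n)/(1-u)"
    using u1 unfolding nm by (simp add: sum_gp)
  have "((u^n - u^(2*n+2)) - (1 - u^n)) / (1 - u) = 0"
    using assms(3) unfolding s1 s2 by (metis diff_divide_distrib)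
  with u1 have key: "u^n - u^(2*n+2) = 1 - u^n" by simp
  have ult: "u < 1"
  proof (rule ccontr)
    assume "\<not> u < 1"
    with u1 have "u > 1" by simp
    then have a1: "u^n > 1" using assms(1) by (simp add: one_less_power)
    have "u^(2*n+2) = (u^n)^2 * u^2" by (simp add: power_add mult_2 power2_eq_square)
    also have "\<dots> > (u^n)^2" using \<open>u > 1\<close> a1 by (simp add: one_less_power)
    finally have "u^(2*n+2) > (u^n)^2" .
    with key have "(u^n - 1)^2 < 0" by (simp add: power2_eq_square algebra_simps)
    then show False by simp
  qed
  define c where "c = 1 - u^(n+2)"
  have up: "0 < u^(n+2)" "u^(n+2) < 1" using assms(2) ult power_less_one_iff[of u "n+2"] by (auto simp del: power_Suc)
  then have c01: "0 < c" "c < 1" unfolding c_def by auto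
  have e2: "u^(2*n+2) = (u^(n+2)) * u^n"
    by (simp add: power_add[symmetric] mult_2)
  have h1: "1 - c = u^(n+2)" unfolding c_def by simp
  have h2: "1 / (1 + c) = u^n"
  proof -
    have "u^n * (1 + c) = 1" unfolding c_def using key e2 by (simp add: algebra_simps)
    moreover have "1 + c \<noteq> 0" using c01 by simp
    ultimately show ?thesis by (simp add: field_simps)
  qed
  have h3: "1 - c^2 = u^2"
  proof -
    have "1 - c^2 = (1 - c) * (1 + c)" by (simp add: algebra_simps power2_eq_square)
    also have "\<dots> = u^2 * (u^n * (1 + c))" unfolding h1 by (simp add: power_add power2_eq_square algebra_simps)
    also have "u^n * (1 + c) = 1" using h2 c01 by (simp add: field_simps)
    finally show ?thesis by simp
  qed
  have "G c = - (pi^2/6)" by (rule G_const[OF c01])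
  then show ?thesis unfolding G_def h1 h2 h3 .
qed

end
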